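(* Let $K,T\subset\mathbb{R}^n$ be convex bodies and let $q=(q_1,\dots,q_m)$ be a closed $(K,T)$-Minkowski billiard trajectory with respect to the $K$-supporting hyperplanes $H_1,\dots,H_m$, with associated outer unit normal vectors $n_K(q_1),\dots,n_K(q_m)$ normal to $H_1,\dots,H_m$. Then $0\in\operatorname{conv}\{n_K(q_1),\dots,n_K(q_m)\}$. If moreover $T$ is smooth, then the convex cone $\widetilde U$ spanned by $n_K(q_1),\dots,n_K(q_m)$ is a linear subspace of $\mathbb{R}^n$ with $\dim\widetilde U\le m-1$.
   Context: A convex body is a compact convex set in $\mathbb{R}^n$ containing the origin in its interior; it is smooth if through each boundary point there is a unique supporting hyperplane. For a convex set $C$ and $z\in\partial C$, $N_C(z)=\{v:\langle v,y-z\rangle\le 0\ \forall y\in C\}$. A closed polygonal curve $(q_1,\dots,q_m)$, $m\ge2$, always satisfies $q_j\ne q_{j+1}$ and $q_j\notin[q_{j-1},q_{j+1}]$ (indices mod $m$). A closed polygonal curve $q$ with vertices on $\partial K$ is a closed $(K,T)$-Minkowski billiard trajectory with respect to the $K$-supporting hyperplanes $H_1,\dots,H_m$ through $q_1,\dots,q_m$ if there are $p_1,\dots,p_m\in\partial T$, outer unit normals $n_K(q_j)\in N_K(q_j)$ normal to $H_j$, and $\mu_j\ge 0$ with $q_{j+1}-q_j\in N_T(p_j)$ and $p_{j+1}-p_j=-\mu_{j+1}n_K(q_{j+1})$ for all $j$. *)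

theory Defs
  imports "HOL-Analysis.Analysis"
begin

definition convex_body :: "'a::euclidean_space set \<Rightarrow> bool" where
  "convex_body K \<longleftrightarrow> compact K \<and> convex K \<and> 0 \<in> interior K"

definition normal_cone :: "'a::euclidean_space set \<Rightarrow> 'a \<Rightarrow> 'a set" where
  "normal_cone C z = {v. \<forall>y\<in>C. inner v (y - z) \<le> 0}"

definition supporting_hyperplane :: "'a::euclidean_space set \<Rightarrow> 'a \<Rightarrow> 'a set \<Rightarrow> bool" where
  "supporting_hyperplane K z H \<longleftrightarrow>
     (\<exists>u. u \<noteq> 0 \<and> H = {x. inner u x = inner u z} \<and> (\<forall>y\<in>K. inner u y \<le> inner u z))"

definition smooth_body :: "'a::euclidean_space set \<Rightarrow> bool" where
  "smooth_body K \<longleftrightarrow> convex_body K \<and> (\<forall>z\<in>frontier K. \<exists>!H. supporting_hyperplane K z H)"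

definition closed_polygonal_curve :: "nat \<Rightarrow> (nat \<Rightarrow> 'a::euclidean_space) \<Rightarrow> bool" where
  "closed_polygonal_curve m q \<longleftrightarrow> 2 \<le> m \<and>
     (\<forall>j<m. q j \<noteq> q ((j + 1) mod m) \<and>
            q j \<notin> closed_segment (q ((j + m - 1) mod m)) (q ((j + 1) mod m)))"

definition minkowski_billiard_traj ::
  "'a::euclidean_space set \<Rightarrow> 'a set \<Rightarrow> nat \<Rightarrow> (nat \<Rightarrow> 'a) \<Rightarrow> (nat \<Rightarrow> 'a set) \<Rightarrow> (nat \<Rightarrow> 'a) \<Rightarrow> bool"
  where
  "minkowski_billiard_traj K T m q H n \<longleftrightarrow>
     closed_polygonal_curve m q \<and>
     (\<forall>j<m. q j \<in> frontier K \<and> supporting_hyperplane K (q j) (H j) \<and>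
            norm (n j) = 1 \<and> n j \<in> normal_cone K (q j) \<and>
            H j = {x. inner (n j) (x - q j) = 0}) \<and>
     (\<exists>p mu. (\<forall>j<m. p j \<in> frontier T \<and> mu j \<ge> (0::real)) \<and>
        (\<forall>j<m. q ((j + 1) mod m) - q j \<in> normal_cone T (p j) \<and>
               p ((j + 1) mod m) - p j = - (mu ((j + 1) mod m) *\<^sub>R n ((j + 1) mod m))))"

end

theory Submission
  imports Defs
begin

lemma pointed_sum:
  fixes v :: "nat \<Rightarrow> 'a::euclidean_space"
  assumes T: "convex_body T" and A: "finite A"
    and v: "\<And>j. j\<in>A \<Longrightarrow> v j \<in> normal_cone T p" and s: "sum v A = 0"
    and j: "j \<in> A"
  shows "v j = 0"
proof (rule ccontr)
  assume nz: "v j \<noteq> 0"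
  have eq: "inner (v j) (y - p) = 0" if y: "y \<in> T" for y
  proof -
    have le: "\<And>i. i\<in>A \<Longrightarrow> inner (v i) (y - p) \<le> 0" using v y by (auto simp: normal_cone_def)
    have "(\<Sum>i\<in>A. inner (v i) (y - p)) = inner (sum v A) (y - p)" by (simp add: inner_sum_left)
    also have "\<dots> = 0" using s by simp
    finally have "(\<Sum>i\<in>A. - inner (v i) (y - p)) = 0" by (simp add: sum_negf)
    then have "\<forall>i\<in>A. - inner (v i) (y - p) = 0" using sum_nonneg_eq_0_iff[OF A, of "\<lambda>i. - inner (v i) (y - p)"] le by force
    then show ?thesis using j by simp
  qed
  obtain e where e: "e > 0" "ball 0 e \<subseteq> T" using T unfolding convex_body_def
    using mem_interior by blast
  have "0 \<in> T" using e by auto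
  from eq[OF this] have 1: "inner (v j) p = 0" by simp
  define y where "y = (e / (2 * norm (v j))) *\<^sub>R v j"
  have "norm y = e/2" using nz e by (simp add: y_def)
  then have "y \<in> T" using e by auto
  from eq[OF this] 1 have "inner (v j) y = 0" by (simp add: inner_diff_right)
  then have "(e / (2 * norm (v j))) * (inner (v j) (v j)) = 0" by (simp add: y_def)
  then show False using nz e by simp
qed

lemma sum_shift_mod:
  fixes f :: "nat \<Rightarrow> 'b::comm_monoid_add"
  assumes "0 < m"
  shows "(\<Sum>j<m. f ((j+1) mod m)) = (\<Sum>j<m. f j)"
proof -
  obtain k where m: "m = Suc k" using assms by (cases m) auto
  have "(\<Sum>j<Suc k. f ((j+1) mod Suc k)) = (\<Sum>j<k. f ((j+1) mod Suc k)) + f 0"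
    by simp
  also have "(\<Sum>j<k. f ((j+1) mod Suc k)) = (\<Sum>j<k. f (Suc j))"
    by (rule sum.cong) auto
  also have "\<dots> + f 0 = (\<Sum>j<Suc k. f j)" unfolding sum.lessThan_Suc_shift by (simp add: add.commute)
  finally show ?thesis using m by simp
qed

lemma parallel_normal:
  fixes u v :: "'a::euclidean_space"
  assumes S: "smooth_body T" and p: "p \<in> frontier T"
    and u: "u \<in> normal_cone T p" and v: "v \<in> normal_cone T p" and uz: "u \<noteq> 0" and vz: "v \<noteq> 0"
  shows "\<exists>c>0. u = c *\<^sub>R v"
proof -
  have T: "convex_body T" using S by (simp add: smooth_body_def)
  have hu: "supporting_hyperplane T p {x. inner u x = inner u p}"
    unfolding supporting_hyperplane_def using u uz by (auto simp: normal_cone_def inner_diff_right)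
  have hv: "supporting_hyperplane T p {x. inner v x = inner v p}"
    unfolding supporting_hyperplane_def using v vz by (auto simp: normal_cone_def inner_diff_right)
  have heq: "{x. inner u x = inner u p} = {x. inner v x = inner v p}"
    using S p hu hv unfolding smooth_body_def by blast
  define c where "c = inner u v / inner v v"
  define w where "w = u - c *\<^sub>R v"
  have vw: "inner v w = 0" using vz by (simp add: w_def c_def inner_diff_right inner_commute)
  then have "p + w \<in> {x. inner v x = inner v p}" by (simp add: inner_add_right)
  then have "inner u (p + w) = inner u p" using heq by blast
  then have uw: "inner u w = 0" by (simp add: inner_add_right)
  have "inner w w = inner u w - c * inner v w" by (simp add: w_def inner_diff_left)
  then have "w = 0" using uw vw by simp
  then have ucv: "u = c *\<^sub>R v" by (simp add: w_def)
  have "c \<noteq> 0" using ucv uz by auto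
  moreover have "\<not> c < 0"
  proof
    assume c: "c < 0"
    have "(-c) *\<^sub>R v \<in> normal_cone T p" using v c
      by (auto simp: normal_cone_def mult_nonpos_nonpos)
    then have "u = 0"
      using pointed_sum[OF T, of "{0::nat,1}" "\<lambda>i. if i = 0 then u else (-c) *\<^sub>R v" p 0] u ucv
      by auto
    then show False using uz by simp
  qed
  ultimately show ?thesis using ucv by (intro exI[of _ c]) auto
qed

lemma cone_hull_sum:
  assumes "finite A" "\<And>i. i \<in> A \<Longrightarrow> f i \<in> convex_cone hull S"
  shows "sum f A \<in> convex_cone hull S"
  using assms by (induction A rule: finite_induct)
    (auto simp: convex_cone_hull_contains_0 convex_cone_hull_add)

theorem proposition3p7:
  fixes K T :: "'a::euclidean_space set" and m :: nat and q n :: "nat \<Rightarrow> 'a"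
    and H :: "nat \<Rightarrow> 'a set"
  assumes "convex_body K" and "convex_body T"
    and "minkowski_billiard_traj K T m q H n"
  shows "0 \<in> convex hull (n ` {..<m}) \<and>
         (smooth_body T \<longrightarrow>
           subspace (convex_cone hull (n ` {..<m})) \<and>
           dim (convex_cone hull (n ` {..<m})) \<le> m - 1)"
proof -
  have cpc: "closed_polygonal_curve m q" using assms(3) by (simp add: minkowski_billiard_traj_def)
  then have m2: "2 \<le> m" and poly: "\<And>j. j < m \<Longrightarrow> q j \<noteq> q ((j + 1) mod m) \<and>
            q j \<notin> closed_segment (q ((j + m - 1) mod m)) (q ((j + 1) mod m))"
    by (auto simp: closed_polygonal_curve_def)
  obtain p mu where pm: "\<And>j. j<m \<Longrightarrow> p j \<in> frontier T \<and> mu j \<ge> (0::real)"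
    and nc: "\<And>j. j<m \<Longrightarrow> q ((j + 1) mod m) - q j \<in> normal_cone T (p j)"
    and pd: "\<And>j. j<m \<Longrightarrow> p ((j + 1) mod m) - p j = - (mu ((j + 1) mod m) *\<^sub>R n ((j + 1) mod m))"
    using assms(3) unfolding minkowski_billiard_traj_def by metis
  have m0: "0 < m" using m2 by simp
  have key: "(\<Sum>k<m. mu k *\<^sub>R n k) = 0"
  proof -
    have "(\<Sum>j<m. p ((j + 1) mod m) - p j) = 0"
      using sum_shift_mod[OF m0, of p] by (simp add: sum_subtractf)
    moreover have "(\<Sum>j<m. p ((j + 1) mod m) - p j) = - (\<Sum>j<m. mu ((j + 1) mod m) *\<^sub>R n ((j + 1) mod m))"
      using pd by (simp add: sum_negf)
    ultimately show ?thesis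
      using sum_shift_mod[OF m0, of "\<lambda>k. mu k *\<^sub>R n k"] by simp
  qed
  have expos: "\<exists>k<m. mu k > 0"
  proof (rule ccontr)
    assume "\<not> ?thesis"
    then have z: "\<And>k. k<m \<Longrightarrow> mu k = 0" using pm by force
    have pe: "\<And>j. j<m \<Longrightarrow> p ((j + 1) mod m) = p j" using pd z m0 by force
    have p0: "j < m \<Longrightarrow> p j = p 0" for j
    proof (induction j)
      case (Suc j)
      have "p ((j + 1) mod m) = p j" using pe[of j] Suc.prems by simp
      moreover have "(j + 1) mod m = Suc j" using Suc.prems by simp
      ultimately show ?case using Suc.IH Suc.prems by (metis Suc_lessD)
    qed simp
    have "q ((0 + 1) mod m) - q 0 = 0"
    proof (rule pointed_sum[OF assms(2), of "{..<m}" "\<lambda>j. q ((j + 1) mod m) - q j" "p 0"])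
      show "(\<Sum>j<m. q ((j + 1) mod m) - q j) = 0"
        using sum_shift_mod[OF m0, of q] by (simp add: sum_subtractf)
      show "q ((j + 1) mod m) - q j \<in> normal_cone T (p 0)" if "j \<in> {..<m}" for j
        using nc[of j] p0[of j] that by simp
    qed (use m0 in auto)
    then show False using poly[OF m0] by simp
  qed
  then obtain k0 where k0: "k0 < m" "mu k0 > 0" by blast
  define S where "S = sum mu {..<m}"
  have Spos: "S > 0" unfolding S_def
    using k0 pm by (intro sum_pos2[of _ k0]) auto
  have part1: "0 \<in> convex hull (n ` {..<m})"
  proof -
    have "(\<Sum>k<m. (mu k / S) *\<^sub>R n k) \<in> convex hull (n ` {..<m})"
      apply (rule convex_sum)
      using Spos pm by (auto simp: S_def sum_divide_distrib[symmetric] hull_inc)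
    moreover have "(\<Sum>k<m. (mu k / S) *\<^sub>R n k) = (1/S) *\<^sub>R (\<Sum>k<m. mu k *\<^sub>R n k)"
      by (simp add: scaleR_sum_right)
    ultimately show ?thesis using key by simp
  qed
  show ?thesis
  proof (intro conjI impI part1)
    assume sm: "smooth_body T"
    have allpos: "mu k > 0" if k: "k < m" for k
    proof (rule ccontr)
      assume "\<not> mu k > 0"
      then have mk: "mu k = 0" using pm k by force
      define i where "i = (k + m - 1) mod m"
      have i: "i < m" using m0 by (simp add: i_def)
      have ik: "(i + 1) mod m = k"
      proof -
        have "(i + 1) mod m = (k + m - 1 + 1) mod m" unfolding i_def by (simp add: mod_Suc_eq)
        also have "k + m - 1 + 1 = k + m" using m0 by simp
        finally show ?thesis using k by simp
      qed
      have pik: "p k = p i" using pd[OF i] ik mk by simp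
      define a where "a = q k - q i"
      define b where "b = q ((k + 1) mod m) - q k"
      have a: "a \<in> normal_cone T (p k)" using nc[OF i] ik pik by (simp add: a_def)
      have b: "b \<in> normal_cone T (p k)" using nc[OF k] by (simp add: b_def)
      have az: "a \<noteq> 0" using poly[OF i] ik by (auto simp: a_def)
      have bz: "b \<noteq> 0" using poly[OF k] by (auto simp: b_def)
      obtain c where c: "c > 0" "a = c *\<^sub>R b"
        using parallel_normal[OF sm _ a b az bz] pm[OF k] by blast
      define r where "r = q ((k + 1) mod m)"
      have e1: "(1 + c) *\<^sub>R q k = q i + c *\<^sub>R r"
        using c(2) unfolding a_def b_def r_def by (simp add: algebra_simps)
      have "q k = (1 - c/(1+c)) *\<^sub>R q i + (c/(1+c)) *\<^sub>R r"
      proof -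
        have "q k = (1/(1+c)) *\<^sub>R ((1 + c) *\<^sub>R q k)" using c by simp
        also have "\<dots> = (1/(1+c)) *\<^sub>R (q i + c *\<^sub>R r)" using e1 by simp
        also have "\<dots> = (1 - c/(1+c)) *\<^sub>R q i + (c/(1+c)) *\<^sub>R r"
          using c by (simp add: scaleR_add_right field_simps)
        finally show ?thesis .
      qed
      then have "q k \<in> closed_segment (q i) r"
        unfolding closed_segment_def using c by (intro CollectI exI[of _ "c/(1+c)"]) auto
      then show False using poly[OF k] by (simp add: i_def r_def)
    qed
    define V where "V = convex_cone hull (n ` {..<m})"
    have nV: "n k \<in> V" if "k < m" for k unfolding V_def using that by (intro hull_inc) auto
    have negV: "- n k \<in> V" if k: "k < m" for k
    proof -
      have "(\<Sum>i<m. mu i *\<^sub>R n i) = mu k *\<^sub>R n k + (\<Sum>i\<in>{..<m} - {k}. mu i *\<^sub>R n i)"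
        using k by (simp add: sum.remove)
      then have R: "(\<Sum>i\<in>{..<m} - {k}. mu i *\<^sub>R n i) = - (mu k *\<^sub>R n k)"
        using key by (metis add.commute eq_neg_iff_add_eq_0)
      have "- n k = (1 / mu k) *\<^sub>R (\<Sum>i\<in>{..<m} - {k}. mu i *\<^sub>R n i)"
        unfolding R using allpos[OF k] by simp
      also have "\<dots> \<in> V" unfolding V_def
        apply (rule convex_cone_hull_mul)
         apply (rule cone_hull_sum)
        using allpos nV[unfolded V_def] k by (auto intro!: convex_cone_hull_mul less_imp_le)
      finally show ?thesis .
    qed
    define C where "C = {x \<in> V. - x \<in> V}"
    have "convex_cone C" unfolding convex_cone_iff
    proof (intro conjI ballI allI impI)
      show "0 \<in> C" by (simp add: C_def V_def convex_cone_hull_contains_0)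
      show "x + y \<in> C" if "x \<in> C" "y \<in> C" for x y
      proof -
        have "- (x + y) = (-x) + (-y)" by simp
        then show ?thesis using that unfolding C_def V_def
          by (metis (no_types, lifting) convex_cone_hull_add mem_Collect_eq)
      qed
      show "c *\<^sub>R x \<in> C" if "x \<in> C" "c \<ge> 0" for x c
      proof -
        have "- (c *\<^sub>R x) = c *\<^sub>R (-x)" by simp
        then show ?thesis using that unfolding C_def V_def
          by (metis (no_types, lifting) convex_cone_hull_mul mem_Collect_eq)
      qed
    qed
    moreover have "n ` {..<m} \<subseteq> C" using nV negV by (auto simp: C_def)
    ultimately have VC: "V \<subseteq> C" unfolding V_def by (rule hull_minimal[rotated])
    have subV: "subspace V"
      unfolding subspace_def
    proof (intro conjI ballI allI)
      show "0 \<in> V" by (simp add: V_def convex_cone_hull_contains_0)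
      show "x + y \<in> V" if "x \<in> V" "y \<in> V" for x y
        using that by (simp add: V_def convex_cone_hull_add)
      show "c *\<^sub>R x \<in> V" if x: "x \<in> V" for c x
      proof (cases "c \<ge> 0")
        case True then show ?thesis using x by (simp add: V_def convex_cone_hull_mul)
      next
        case False
        have "-x \<in> V" using VC x by (auto simp: C_def)
        then have "(-c) *\<^sub>R (-x) \<in> V" using False unfolding V_def
          by (intro convex_cone_hull_mul) auto
        then show ?thesis by simp
      qed
    qed
    define W where "W = n ` {1..<m}"
    have ccW: "convex_cone (span W)"
      by (auto simp: convex_cone_iff span_0 span_add span_scale)
    have XW: "n ` {..<m} \<subseteq> span W"
    proof
      fix x assume "x \<in> n ` {..<m}"
      then obtain k where k: "k < m" "x = n k" by auto
      show "x \<in> span W"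
      proof (cases "k = 0")
        case False then show ?thesis using k by (auto simp: W_def intro!: span_base)
      next
        case True
        have "(\<Sum>i<m. mu i *\<^sub>R n i) = mu 0 *\<^sub>R n 0 + (\<Sum>i\<in>{..<m} - {0}. mu i *\<^sub>R n i)"
          using m0 by (simp add: sum.remove)
        moreover have "{..<m} - {0} = {1..<m}" by auto
        ultimately have R: "(\<Sum>i\<in>{1..<m}. mu i *\<^sub>R n i) = - (mu 0 *\<^sub>R n 0)"
          using key by (metis add.commute eq_neg_iff_add_eq_0)
        have "n 0 = - (1 / mu 0) *\<^sub>R (\<Sum>i\<in>{1..<m}. mu i *\<^sub>R n i)"
          unfolding R using allpos[OF m0] by simp
        also have "\<dots> \<in> span W"
          by (intro span_scale span_sum span_base) (auto simp: W_def)
        finally show ?thesis using True k by simp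
      qed
    qed
    have VW: "V \<subseteq> span W" unfolding V_def using XW ccW by (rule hull_minimal)
    have "dim V \<le> card W" by (rule dim_le_card[OF VW]) (simp add: W_def)
    also have "card W \<le> card {1..<m}" unfolding W_def by (rule card_image_le) simp
    finally have "dim V \<le> m - 1" by simp
    then show "subspace (convex_cone hull (n ` {..<m}))"
      and "dim (convex_cone hull (n ` {..<m})) \<le> m - 1" using subV by (simp_all add: V_def)
  qed
qed

end
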